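(* Take the special vertex $v=0$. Let $I,J$ be non-crossing $m$-subsets of $\{1,\dots,n\}$ (equivalently $\operatorname{Ext}^1_A(M_I,M_J)=0$). Then $$c(I,J)=\kappa(M_J,M_I)-\kappa(M_I,M_J),$$ where $c(I,J)$ is the exponent in the quasi-commutation relation $\Delta_q^I\Delta_q^J=q^{c(I,J)}\Delta_q^J\Delta_q^I$ of quantum minors in the quantum Grassmannian.
   Context: Fix integers $1\le m<n$. $A$ is the quotient of the complete path algebra of the quiver with vertices $\mathbb{Z}_n$ and arrows $x_a\colon a-1\to a$, $y_a\colon a\to a-1$ ($a\in\{1,\dots,n\}$) by the relations $xy=yx$, $x^m=y^{n-m}$ at every vertex; centre $Z=\mathbb{C}[[t]]$; $\operatorname{CM}(A)$ is the category of finitely generated $A$-modules free over $Z$. For an $m$-subset $I$, $M_I$ has $e_jM_I=Z$ for all $j$, $x_a$ acting by $1$ if $a\in I$ and $t$ otherwise, $y_a$ acting by $t$ if $a\in I$ and $1$ otherwise. $\kappa(M,N)=\dim_{\mathbb{C}}\operatorname{coker}\big(\operatorname{Hom}_A(M,N)\to\operatorname{Hom}_Z(e_vM,e_vN)\big)$. Two $m$-subsets $I,J$ are non-crossing if either (i) $J\setminus I=J'\sqcup J''$ with $J'<(I\setminus J)<J''$, or (ii) $I\setminus J=I'\sqcup I''$ with $I'<(J\setminus I)<I''$ (where $X<Y$ means every element of $X$ is less than every element of $Y$); then $c(I,J)=|J''|-|J'|$ in case (i) and $c(I,J)=|I'|-|I''|$ in case (ii) (these agree if both hold). The quantum Grassmannian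 $\mathbb{C}_q[\operatorname{Gr}(m,n)]$ is the subalgebra of the quantum matrix algebra $\mathbb{C}_q[M_{m\times n}]$ generated by the quantum minors $\Delta_q^I=\sum_{\sigma\in S_m}(-q)^{\ell(\sigma)}x_{1,i_{\sigma(1)}}\cdots x_{m,i_{\sigma(m)}}$ ($I=\{i_1<\dots<i_m\}$), where $\mathbb{C}_q[M_{m\times n}]$ is generated over $\mathbb{C}[q^{\pm1}]$ by $x_{ij}$ with relations $x_{ij}x_{st}=qx_{st}x_{ij}$ if $i=s,j<t$ or $i<s,j=t$; $x_{ij}x_{st}=x_{st}x_{ij}$ if $i<s,j>t$; $x_{ij}x_{st}=x_{st}x_{ij}+(q-q^{-1})x_{sj}x_{it}$ if $i<s,j<t$. It is known (Leclerc–Zelevinsky) that for non-crossing $I,J$, $\Delta_q^I\Delta_q^J=q^{c(I,J)}\Delta_q^J\Delta_q^I$. *)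

theory Defs
  imports "HOL-Computational_Algebra.Formal_Power_Series" "HOL-Library.Extended_Nat"
begin

(* Centre Z = C[[t]], t = fps_X.  Vertices of the cyclic quiver Z_n are 0..n-1;
   arrow x_a : a-1 -> (a mod n), y_a : (a mod n) -> a-1 for a in {1..n}. *)
type_synonym Zs = "complex fps"

(* action of x_a and y_a on M_I (every e_j M_I = Z) *)
definition xact :: "nat set \<Rightarrow> nat \<Rightarrow> Zs" where
  "xact I a = (if a \<in> I then 1 else fps_X)"

definition yact :: "nat set \<Rightarrow> nat \<Rightarrow> Zs" where
  "yact I a = (if a \<in> I then fps_X else 1)"

definition zlinear :: "(Zs \<Rightarrow> Zs) \<Rightarrow> bool" where
  "zlinear f \<longleftrightarrow> (\<forall>a u w. f (a * u + w) = a * f u + f w)"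

(* Hom_A(M_I, M_J): families of Z-linear maps phi_j : e_j M_I -> e_j M_J (j in Z_n)
   commuting with the actions of all arrows x_a, y_a *)
definition homA :: "nat \<Rightarrow> nat set \<Rightarrow> nat set \<Rightarrow> (nat \<Rightarrow> Zs \<Rightarrow> Zs) set" where
  "homA n I J = {\<phi>. (\<forall>j<n. zlinear (\<phi> j)) \<and>
      (\<forall>a\<in>{1..n}. \<forall>s.
         \<phi> (a mod n) (xact I a * s) = xact J a * \<phi> (a - 1) s \<and>
         \<phi> (a - 1) (yact I a * s) = yact J a * \<phi> (a mod n) s)}"

(* kappa(M_I, M_J) at vertex v: C-dimension of the cokernel of the restriction map
   Hom_A(M_I,M_J) -> Hom_Z(e_v M_I, e_v M_J), i.e. the least number of elements of
   Hom_Z(Z,Z) spanning it modulo the image (infinity if there is no finite such set). *)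
definition kappa :: "nat \<Rightarrow> nat \<Rightarrow> nat set \<Rightarrow> nat set \<Rightarrow> enat" where
  "kappa n v I J = Inf {enat k | k. \<exists>g :: nat \<Rightarrow> Zs \<Rightarrow> Zs. (\<forall>i<k. zlinear (g i)) \<and>
      (\<forall>f. zlinear f \<longrightarrow> (\<exists>\<phi>\<in>homA n I J. \<exists>c :: nat \<Rightarrow> complex.
          f = (\<lambda>s. \<phi> v s + (\<Sum>i<k. fps_const (c i) * g i s))))}"

definition set_less :: "nat set \<Rightarrow> nat set \<Rightarrow> bool" where
  "set_less X Y \<longleftrightarrow> (\<forall>x\<in>X. \<forall>y\<in>Y. x < y)"

definition nc_i :: "nat set \<Rightarrow> nat set \<Rightarrow> nat set \<Rightarrow> nat set \<Rightarrow> bool" where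
  "nc_i I J J' J'' \<longleftrightarrow> J - I = J' \<union> J'' \<and> J' \<inter> J'' = {} \<and>
      set_less J' (I - J) \<and> set_less (I - J) J''"

definition nc_ii :: "nat set \<Rightarrow> nat set \<Rightarrow> nat set \<Rightarrow> nat set \<Rightarrow> bool" where
  "nc_ii I J I' I'' \<longleftrightarrow> I - J = I' \<union> I'' \<and> I' \<inter> I'' = {} \<and>
      set_less I' (J - I) \<and> set_less (J - I) I''"

definition noncrossing :: "nat set \<Rightarrow> nat set \<Rightarrow> bool" where
  "noncrossing I J \<longleftrightarrow> (\<exists>J' J''. nc_i I J J' J'') \<or> (\<exists>I' I''. nc_ii I J I' I'')"

definition cexp :: "nat set \<Rightarrow> nat set \<Rightarrow> int" where
  "cexp I J = (if (\<exists>J' J''. nc_i I J J' J'')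
     then (SOME k. \<exists>J' J''. nc_i I J J' J'' \<and> k = int (card J'') - int (card J'))
     else (SOME k. \<exists>I' I''. nc_ii I J I' I'' \<and> k = int (card I') - int (card I'')))"

end

theory Submission
  imports Defs
begin
unbundle fps_syntax

lemma zlin_zero: "zlinear f \<Longrightarrow> f 0 = 0"
  unfolding zlinear_def by (metis add.right_neutral add_cancel_right_right mult_1)

lemma zlin_apply: "zlinear f \<Longrightarrow> f s = s * f 1"
proof -
  assume z: "zlinear f"
  have "f (s * 1 + 0) = s * f 1 + f 0" using z unfolding zlinear_def by blast
  thus ?thesis using zlin_zero[OF z] by simp
qed

lemma zlin_mult: "zlinear (\<lambda>s. s * c)"
  unfolding zlinear_def by (simp add: algebra_simps)

definition fsc :: "complex \<Rightarrow> Zs \<Rightarrow> Zs" where "fsc c u = fps_const c * u"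

interpretation fv: vector_space fsc
proof
  fix a b :: complex and x y :: Zs
  show "fsc a (x + y) = fsc a x + fsc a y" by (simp add: fsc_def distrib_left)
  show "fsc (a + b) x = fsc a x + fsc b x" by (simp add: fsc_def distrib_right flip: fps_const_add)
  show "fsc a (fsc b x) = fsc (a * b) x" by (simp add: fsc_def mult.assoc flip: fps_const_mult)
  show "fsc 1 x = x" by (simp add: fsc_def)
qed

definition trunc :: "nat \<Rightarrow> Zs \<Rightarrow> Zs" where
  "trunc K u = Abs_fps (\<lambda>i. if i < K then u $ i else 0)"

lemma trunc_add: "trunc K (u + w) = trunc K u + trunc K w"
  by (rule fps_ext) (simp add: trunc_def)

lemma trunc_zero: "trunc K 0 = 0"
  by (rule fps_ext) (simp add: trunc_def)

lemma trunc_sum: "finite A \<Longrightarrow> trunc K (\<Sum>i\<in>A. f i) = (\<Sum>i\<in>A. trunc K (f i))"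
  by (induction A rule: finite_induct) (auto simp: trunc_add trunc_zero)

lemma trunc_const: "trunc K (fps_const c * u) = fsc c (trunc K u)"
  by (rule fps_ext) (simp add: trunc_def fsc_def)

lemma trunc_Xpow: "trunc K (fps_X ^ K * w) = 0"
  by (rule fps_ext) (simp add: trunc_def fps_X_power_mult_nth)

lemma trunc_Xl: "l < K \<Longrightarrow> trunc K (fps_X ^ l) = fps_X ^ l"
  by (rule fps_ext) (auto simp: trunc_def fps_X_power_nth)

lemma Xpow_inj: "inj (\<lambda>l::nat. (fps_X :: Zs) ^ l)"
proof (rule injI)
  fix i j :: nat assume "(fps_X :: Zs) ^ i = fps_X ^ j"
  hence "((fps_X :: Zs) ^ i) $ i = (fps_X ^ j) $ i" by simp
  thus "i = j" by (simp add: fps_X_power_nth split: if_splits)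
qed

lemma Xpow_indep: "fv.independent ((\<lambda>l. (fps_X :: Zs) ^ l) ` {..<K})"
proof (rule fv.independent_if_scalars_zero)
  show "finite ((\<lambda>l. (fps_X :: Zs) ^ l) ` {..<K})" by simp
next
  fix f x assume s: "(\<Sum>x\<in>(\<lambda>l. (fps_X :: Zs) ^ l) ` {..<K}. fsc (f x) x) = 0"
    and x: "x \<in> (\<lambda>l. (fps_X :: Zs) ^ l) ` {..<K}"
  then obtain l where l: "l < K" "x = fps_X ^ l" by auto
  have "0 = (\<Sum>x\<in>(\<lambda>l. (fps_X :: Zs) ^ l) ` {..<K}. fsc (f x) x) $ l" using s by simp
  also have "\<dots> = (\<Sum>j<K. fsc (f (fps_X ^ j)) (fps_X ^ j) $ l)"
    by (simp add: fps_sum_nth sum.reindex inj_on_subset[OF Xpow_inj])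
  also have "\<dots> = (\<Sum>j<K. if j = l then f (fps_X ^ l) else 0)"
    by (rule sum.cong) (auto simp: fsc_def fps_X_power_nth)
  also have "\<dots> = f x" using l by simp
  finally show "f x = 0" by simp
qed

lemma decomp: "u = (\<Sum>i<K. fps_const (u $ i) * fps_X ^ i) + fps_X ^ K * fps_shift K u"
proof (rule fps_ext)
  fix j
  have "(\<Sum>i<K. fps_const (u $ i) * fps_X ^ i) $ j = (\<Sum>i<K. u $ i * (if j = i then 1 else 0))"
    by (simp add: fps_sum_nth fps_X_power_nth)
  also have "\<dots> = (\<Sum>i<K. if j = i then u $ i else 0)" by (rule sum.cong) auto
  also have "\<dots> = (if j < K then u $ j else 0)" by simp
  finally show "u $ j = ((\<Sum>i<K. fps_const (u $ i) * fps_X ^ i) + fps_X ^ K * fps_shift K u) $ j"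
    by (simp add: fps_X_power_mult_nth)
qed

lemma kappa_eq:
  assumes A: "\<forall>\<phi>\<in>homA n I J. fps_X ^ K dvd \<phi> v 1"
    and B: "\<forall>w. \<exists>\<phi>\<in>homA n I J. \<forall>s. \<phi> v s = s * (fps_X ^ K * w)"
  shows "kappa n v I J = enat K"
proof -
  let ?S = "{enat k | k. \<exists>g :: nat \<Rightarrow> Zs \<Rightarrow> Zs. (\<forall>i<k. zlinear (g i)) \<and>
      (\<forall>f. zlinear f \<longrightarrow> (\<exists>\<phi>\<in>homA n I J. \<exists>c :: nat \<Rightarrow> complex.
          f = (\<lambda>s. \<phi> v s + (\<Sum>i<k. fps_const (c i) * g i s))))}"
  have mem: "enat K \<in> ?S"
  proof -
    define g where "g = (\<lambda>(i::nat) (s::Zs). s * fps_X ^ i)"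
    have "\<forall>i<K. zlinear (g i)" by (simp add: g_def zlin_mult)
    moreover have "\<forall>f. zlinear f \<longrightarrow> (\<exists>\<phi>\<in>homA n I J. \<exists>c :: nat \<Rightarrow> complex.
          f = (\<lambda>s. \<phi> v s + (\<Sum>i<K. fps_const (c i) * g i s)))"
    proof (intro allI impI)
      fix f assume z: "zlinear f"
      obtain \<phi> where p: "\<phi> \<in> homA n I J" "\<forall>s. \<phi> v s = s * (fps_X ^ K * fps_shift K (f 1))"
        using B by blast
      have "f = (\<lambda>s. \<phi> v s + (\<Sum>i<K. fps_const (f 1 $ i) * g i s))"
      proof
        fix s
        have "f s = s * f 1" by (rule zlin_apply[OF z])
        also have "\<dots> = s * ((\<Sum>i<K. fps_const (f 1 $ i) * fps_X ^ i) + fps_X ^ K * fps_shift K (f 1))"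
          by (subst decomp[of "f 1" K]) simp
        also have "\<dots> = \<phi> v s + (\<Sum>i<K. fps_const (f 1 $ i) * g i s)"
          by (simp add: p(2) g_def algebra_simps sum_distrib_left)
        finally show "f s = \<phi> v s + (\<Sum>i<K. fps_const (f 1 $ i) * g i s)" .
      qed
      thus "\<exists>\<phi>\<in>homA n I J. \<exists>c :: nat \<Rightarrow> complex.
          f = (\<lambda>s. \<phi> v s + (\<Sum>i<K. fps_const (c i) * g i s))" using p(1) by blast
    qed
    ultimately show ?thesis by blast
  qed
  have low: "enat K \<le> x" if "x \<in> ?S" for x
  proof -
    obtain k g where x: "x = enat k" and gz: "\<forall>i<k. zlinear (g i)"
      and sp: "\<forall>f. zlinear f \<longrightarrow> (\<exists>\<phi>\<in>homA n I J. \<exists>c :: nat \<Rightarrow> complex.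
          f = (\<lambda>s. \<phi> v s + (\<Sum>i<k. fps_const (c i) * g i s)))"
      using \<open>x \<in> ?S\<close> by blast
    let ?T = "(\<lambda>i. trunc K (g i 1)) ` {..<k}"
    have sub: "(\<lambda>l. (fps_X :: Zs) ^ l) ` {..<K} \<subseteq> fv.span ?T"
    proof
      fix y assume "y \<in> (\<lambda>l. (fps_X :: Zs) ^ l) ` {..<K}"
      then obtain l where l: "l < K" "y = fps_X ^ l" by auto
      obtain \<phi> c where pc: "\<phi> \<in> homA n I J"
        "(\<lambda>s. s * fps_X ^ l) = (\<lambda>s. \<phi> v s + (\<Sum>i<k. fps_const (c i) * g i s))"
        using sp zlin_mult by blast
      have "fps_X ^ l = \<phi> v 1 + (\<Sum>i<k. fps_const (c i) * g i 1)"
        using fun_cong[OF pc(2), of 1] by simp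
      hence "trunc K (fps_X ^ l) = trunc K (\<phi> v 1) + (\<Sum>i<k. fsc (c i) (trunc K (g i 1)))"
        by (simp add: trunc_add trunc_sum trunc_const)
      moreover obtain w where "\<phi> v 1 = fps_X ^ K * w" using A pc(1) by (meson dvdE)
      ultimately have "y = (\<Sum>i<k. fsc (c i) (trunc K (g i 1)))"
        using l by (simp add: trunc_Xpow trunc_Xl)
      also have "\<dots> \<in> fv.span ?T"
        by (intro fv.span_sum fv.span_scale fv.span_base) auto
      finally show "y \<in> fv.span ?T" .
    qed
    have "card ((\<lambda>l. (fps_X :: Zs) ^ l) ` {..<K}) \<le> card ?T"
      using fv.independent_span_bound[OF _ Xpow_indep sub] by simp
    moreover have "card ((\<lambda>l. (fps_X :: Zs) ^ l) ` {..<K}) = K"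
      by (simp add: card_image inj_on_subset[OF Xpow_inj])
    moreover have "card ?T \<le> k" using card_image_le[of "{..<k}"] by simp
    ultimately show ?thesis using x by simp
  qed
  have "Inf ?S = enat K" by (rule antisym[OF Inf_lower[OF mem] Inf_greatest[OF low]])
  thus ?thesis unfolding kappa_def .
qed


definition cnt :: "nat set \<Rightarrow> nat \<Rightarrow> nat" where
  "cnt X a = card (X \<inter> {1..a})"

lemma cnt_0[simp]: "cnt X 0 = 0" by (simp add: cnt_def)

lemma cnt_Suc: "cnt X (Suc a) = cnt X a + (if Suc a \<in> X then 1 else 0)"
proof -
  have "X \<inter> {1..Suc a} = (if Suc a \<in> X then insert (Suc a) (X \<inter> {1..a}) else X \<inter> {1..a})"
    by (auto simp: le_Suc_eq)
  thus ?thesis by (simp add: cnt_def)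
qed

lemma cnt_full: "X \<subseteq> {1..n} \<Longrightarrow> cnt X n = card X"
  by (simp add: cnt_def Int_absorb2)

lemma cnt_le: "finite X \<Longrightarrow> cnt X a \<le> card X"
  by (simp add: cnt_def card_mono)

lemma homA_fwd:
  assumes n: "0 < n" and p: "\<phi> \<in> homA n I J"
  shows "a \<le> n \<Longrightarrow> fps_X ^ cnt (J - I) a * \<phi> (a mod n) 1 = fps_X ^ cnt (I - J) a * \<phi> 0 1"
proof (induction a)
  case 0 thus ?case by simp
next
  case (Suc a)
  have an: "a < n" using Suc.prems by simp
  have IH: "fps_X ^ cnt (J - I) a * \<phi> a 1 = fps_X ^ cnt (I - J) a * \<phi> 0 1"
    using Suc.IH an by simp
  have zl: "\<forall>j<n. zlinear (\<phi> j)" and rel: "\<forall>b\<in>{1..n}. \<forall>s.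
         \<phi> (b mod n) (xact I b * s) = xact J b * \<phi> (b - 1) s \<and>
         \<phi> (b - 1) (yact I b * s) = yact J b * \<phi> (b mod n) s"
    using p unfolding homA_def by auto
  have "Suc a \<in> {1..n}" using Suc.prems by simp
  from rel[rule_format, OF this, of 1] have
    r1: "\<phi> (Suc a mod n) (xact I (Suc a)) = xact J (Suc a) * \<phi> a 1" and
    r2: "\<phi> a (yact I (Suc a)) = yact J (Suc a) * \<phi> (Suc a mod n) 1" by auto
  define ub where "ub = \<phi> (Suc a mod n) 1"
  define ua where "ua = \<phi> a 1"
  have "Suc a mod n < n" using n by simp
  hence x: "xact I (Suc a) * ub = xact J (Suc a) * ua"
    using r1 zlin_apply[of "\<phi> (Suc a mod n)" "xact I (Suc a)"] zl ub_def ua_def by auto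
  have y: "yact I (Suc a) * ua = yact J (Suc a) * ub"
    using r2 zlin_apply[of "\<phi> a" "yact I (Suc a)"] zl an ub_def ua_def by auto
  have IH': "fps_X ^ cnt (J - I) a * ua = fps_X ^ cnt (I - J) a * \<phi> 0 1" using IH ua_def by simp
  have "fps_X ^ cnt (J - I) (Suc a) * ub = fps_X ^ cnt (I - J) (Suc a) * \<phi> 0 1"
  proof (cases "Suc a \<in> I"; cases "Suc a \<in> J")
    assume "Suc a \<in> I" "Suc a \<in> J"
    hence "ub = ua" using x by (simp add: xact_def)
    thus ?thesis using IH' \<open>Suc a \<in> I\<close> \<open>Suc a \<in> J\<close> by (simp add: cnt_Suc)
  next
    assume "Suc a \<in> I" "Suc a \<notin> J"
    hence "ub = fps_X * ua" using x by (simp add: xact_def)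
    thus ?thesis using IH' \<open>Suc a \<in> I\<close> \<open>Suc a \<notin> J\<close>
      by (simp add: cnt_Suc)
  next
    assume "Suc a \<notin> I" "Suc a \<in> J"
    hence "ua = fps_X * ub" using y by (simp add: yact_def)
    thus ?thesis using IH' \<open>Suc a \<notin> I\<close> \<open>Suc a \<in> J\<close>
      by (simp add: cnt_Suc) (metis mult.assoc mult.commute)
  next
    assume "Suc a \<notin> I" "Suc a \<notin> J"
    hence "ua = ub" using y by (simp add: yact_def)
    thus ?thesis using IH' \<open>Suc a \<notin> I\<close> \<open>Suc a \<notin> J\<close> by (simp add: cnt_Suc)
  qed
  thus ?case by (simp add: ub_def)
qed

lemma homA_dvd:
  assumes n: "0 < n" and p: "\<phi> \<in> homA n I J" and a: "a \<le> n"
    and K: "K + cnt (I - J) a \<le> cnt (J - I) a"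
  shows "fps_X ^ K dvd \<phi> 0 1"
proof -
  have e: "fps_X ^ cnt (J - I) a * \<phi> (a mod n) 1 = fps_X ^ cnt (I - J) a * \<phi> 0 1"
    using homA_fwd[OF n p a] .
  have "fps_X ^ (K + cnt (I - J) a) dvd (fps_X :: Zs) ^ cnt (J - I) a"
    using K by (rule le_imp_power_dvd)
  hence "fps_X ^ (K + cnt (I - J) a) dvd fps_X ^ cnt (I - J) a * \<phi> 0 1"
    using e by (metis dvd_mult2)
  hence "fps_X ^ cnt (I - J) a * fps_X ^ K dvd fps_X ^ cnt (I - J) a * \<phi> 0 1"
    by (simp add: power_add mult.commute)
  thus ?thesis by (subst (asm) dvd_times_left_cancel_iff) simp_all
qed

lemma homA_bwd:
  assumes n: "0 < n" and IJ: "I \<subseteq> {1..n}" "J \<subseteq> {1..n}"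
    and cd: "card (I - J) = card (J - I)"
    and K: "\<forall>a\<le>n. cnt (J - I) a \<le> K + cnt (I - J) a"
  shows "\<exists>\<phi>\<in>homA n I J. \<forall>s. \<phi> 0 s = s * (fps_X ^ K * w)"
proof -
  define E where "E a = K + cnt (I - J) a - cnt (J - I) a" for a
  define \<phi> where "\<phi> j s = s * (fps_X ^ E j * w)" for j s
  have E0: "E 0 = K" by (simp add: E_def)
  have "I - J \<subseteq> {1..n}" "J - I \<subseteq> {1..n}" using IJ by auto
  hence En: "E n = K"
    using cnt_full[of "I - J" n] cnt_full[of "J - I" n] IJ cd by (auto simp: E_def)
  have modn: "\<phi> (b mod n) = \<phi> b" if "b \<in> {1..n}" for b
  proof (cases "b = n")
    case True thus ?thesis using E0 En n by (auto simp: \<phi>_def fun_eq_iff)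
  next
    case False thus ?thesis using that by simp
  qed
  have "\<phi> \<in> homA n I J"
    unfolding homA_def
  proof (intro CollectI conjI allI impI ballI)
    fix j show "zlinear (\<phi> j)" unfolding \<phi>_def by (rule zlin_mult)
  next
    fix b s assume b: "b \<in> {1..n}"
    then obtain p where bp: "b = Suc p" and pn: "Suc p \<le> n" by (cases b) auto
    have Kp: "cnt (J - I) p \<le> K + cnt (I - J) p" using K pn by simp
    have Kb: "cnt (J - I) (Suc p) \<le> K + cnt (I - J) (Suc p)" using K pn by simp
    have "\<phi> b (xact I b * s) = xact J b * \<phi> p s \<and> \<phi> p (yact I b * s) = yact J b * \<phi> b s"
    proof (cases "b \<in> I"; cases "b \<in> J")
      assume "b \<in> I" "b \<in> J"
      thus ?thesis by (simp add: xact_def yact_def \<phi>_def E_def bp cnt_Suc)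
    next
      assume h: "b \<in> I" "b \<notin> J"
      hence "E b = Suc (E p)" using Kp by (simp add: E_def bp cnt_Suc)
      thus ?thesis using h by (simp add: xact_def yact_def \<phi>_def algebra_simps)
    next
      assume h: "b \<notin> I" "b \<in> J"
      hence "E p = Suc (E b)" using Kb by (simp add: E_def bp cnt_Suc)
      thus ?thesis using h by (simp add: xact_def yact_def \<phi>_def algebra_simps)
    next
      assume "b \<notin> I" "b \<notin> J"
      thus ?thesis by (simp add: xact_def yact_def \<phi>_def E_def bp cnt_Suc algebra_simps)
    qed
    thus "\<phi> (b mod n) (xact I b * s) = xact J b * \<phi> (b - 1) s"
         "\<phi> (b - 1) (yact I b * s) = yact J b * \<phi> (b mod n) s"
      using modn[OF b] bp by auto
  qed
  thus ?thesis by (intro bexI[of _ \<phi>]) (simp_all add: \<phi>_def E0)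
qed

lemma kappa_formula:
  assumes n: "0 < n" and IJ: "I \<subseteq> {1..n}" "J \<subseteq> {1..n}"
    and cd: "card (I - J) = card (J - I)"
    and K1: "\<exists>a\<le>n. K + cnt (I - J) a \<le> cnt (J - I) a"
    and K2: "\<forall>a\<le>n. cnt (J - I) a \<le> K + cnt (I - J) a"
  shows "kappa n 0 I J = enat K"
proof (rule kappa_eq)
  show "\<forall>\<phi>\<in>homA n I J. fps_X ^ K dvd \<phi> 0 1" using K1 homA_dvd[OF n] by blast
  show "\<forall>w. \<exists>\<phi>\<in>homA n I J. \<forall>s. \<phi> 0 s = s * (fps_X ^ K * w)"
    using homA_bwd[OF n IJ cd K2] by blast
qed


lemma case_i:
  assumes n: "0 < n" and IJ: "I \<subseteq> {1..n}" "J \<subseteq> {1..n}"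
    and cd: "card (I - J) = card (J - I)"
    and nc: "nc_i I J J' J''"
  shows "kappa n 0 I J = enat (card J') \<and> kappa n 0 J I = enat (card J'')"
proof -
  have u: "J - I = J' \<union> J''" and dj: "J' \<inter> J'' = {}" and l1: "set_less J' (I - J)"
    and l2: "set_less (I - J) J''" using nc by (auto simp: nc_i_def)
  have fI: "finite I" and fJ: "finite J" using IJ finite_subset by blast+
  have fJ': "finite J'" and fJ'': "finite J''" using u fJ
    by (metis finite_Diff finite_Un)+
  have cJI: "card (J - I) = card J' + card J''" using u dj fJ' fJ'' by (simp add: card_Un_disjoint)
  have J'sub: "J' \<subseteq> J - I" and J''sub: "J'' \<subseteq> J - I" using u by auto
  have fIJ: "finite (I - J)" "finite (J - I)" using fI fJ by auto
  have k1: "kappa n 0 I J = enat (card J')"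
  proof (rule kappa_formula[OF n IJ cd])
    show "\<exists>a\<le>n. card J' + cnt (I - J) a \<le> cnt (J - I) a"
    proof (cases "J' = {}")
      case True thus ?thesis by (intro exI[of _ 0]) simp
    next
      case False
      define a where "a = Max J'"
      have aJ: "a \<in> J'" using False fJ' by (simp add: a_def)
      have an: "a \<le> n" using aJ J'sub IJ by auto
      have "J' \<subseteq> (J - I) \<inter> {1..a}" using J'sub IJ fJ' by (auto simp: a_def)
      hence "card J' \<le> cnt (J - I) a" unfolding cnt_def by (rule card_mono[rotated]) simp
      moreover have "\<forall>y\<in>I - J. a < y" using l1 aJ by (simp add: set_less_def)
      hence "(I - J) \<inter> {1..a} = {}"
      proof (intro equals0I)
        fix x assume h: "\<forall>y\<in>I - J. a < y" and x: "x \<in> (I - J) \<inter> {1..a}"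
        hence "a < x" by blast
        thus False using x by simp
      qed
      ultimately show ?thesis using an by (intro exI[of _ a]) (simp add: cnt_def)
    qed
    show "\<forall>a\<le>n. cnt (J - I) a \<le> card J' + cnt (I - J) a"
    proof (intro allI impI)
      fix a assume an: "a \<le> n"
      show "cnt (J - I) a \<le> card J' + cnt (I - J) a"
      proof (cases "J'' \<inter> {1..a} = {}")
        case True
        hence "(J - I) \<inter> {1..a} \<subseteq> J'" using u by auto
        hence "cnt (J - I) a \<le> card J'" unfolding cnt_def using fJ' by (rule card_mono[rotated])
        thus ?thesis by simp
      next
        case False
        then obtain y where y: "y \<in> J''" "y \<le> a" by auto
        have "I - J \<subseteq> {1..a}"
        proof
          fix x assume x: "x \<in> I - J"
          hence "x < y" using l2 y(1) unfolding set_less_def by blast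
          moreover have "1 \<le> x" using x IJ by auto
          ultimately show "x \<in> {1..a}" using y(2) by simp
        qed
        hence "cnt (I - J) a = card (I - J)" unfolding cnt_def by (simp add: Int_absorb2)
        thus ?thesis using cnt_le[OF fIJ(2), of a] cd by simp
      qed
    qed
  qed
  have cd': "card (J - I) = card (I - J)" using cd by simp
  have k2: "kappa n 0 J I = enat (card J'')"
  proof (rule kappa_formula[OF n IJ(2) IJ(1) cd'])
    show "\<exists>a\<le>n. card J'' + cnt (J - I) a \<le> cnt (I - J) a"
    proof (cases "I - J = {}")
      case True
      hence "card (I - J) = 0" by (simp only: card.empty)
      hence "card (J - I) = 0" using cd by simp
      hence "J - I = {}" using fIJ by simp
      hence "J'' = {}" using J''sub by auto
      thus ?thesis by (intro exI[of _ 0]) simp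
    next
      case False
      define a where "a = Max (I - J)"
      have aJ: "a \<in> I - J" unfolding a_def using Max_in[OF fIJ(1) False] .
      have an: "a \<le> n" using aJ IJ by auto
      have "I - J \<subseteq> {1..a}" using IJ fIJ by (auto simp: a_def)
      hence "cnt (I - J) a = card (I - J)" unfolding cnt_def by (simp add: Int_absorb2)
      moreover have "(J - I) \<inter> {1..a} \<subseteq> J'"
      proof
        fix x assume x: "x \<in> (J - I) \<inter> {1..a}"
        have "x \<notin> J''"
        proof
          assume "x \<in> J''"
          hence "a < x" using l2 aJ unfolding set_less_def by blast
          thus False using x by simp
        qed
        thus "x \<in> J'" using x u by blast
      qed
      hence "cnt (J - I) a \<le> card J'" unfolding cnt_def using fJ' by (rule card_mono[rotated])
      ultimately show ?thesis using an cd cJI by (intro exI[of _ a]) simp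
    qed
    show "\<forall>a\<le>n. cnt (I - J) a \<le> card J'' + cnt (J - I) a"
    proof (intro allI impI)
      fix a assume an: "a \<le> n"
      show "cnt (I - J) a \<le> card J'' + cnt (J - I) a"
      proof (cases "(I - J) \<inter> {1..a} = {}")
        case True thus ?thesis by (simp add: cnt_def)
      next
        case False
        then obtain x where x0: "x \<in> (I - J) \<inter> {1..a}" by (meson ex_in_conv)
        hence x: "x \<in> I - J" "x \<le> a" by auto
        have "J' \<subseteq> (J - I) \<inter> {1..a}"
        proof
          fix z assume z: "z \<in> J'"
          hence "z < x" using l1 x(1) unfolding set_less_def by blast
          moreover have "1 \<le> z" using z J'sub IJ by auto
          ultimately show "z \<in> (J - I) \<inter> {1..a}" using x(2) z J'sub by auto
        qed
        hence "card J' \<le> cnt (J - I) a" unfolding cnt_def by (rule card_mono[rotated]) simp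
        thus ?thesis using cnt_le[OF fIJ(1), of a] cd cJI by simp
      qed
    qed
  qed
  show ?thesis using k1 k2 by simp
qed

lemma nc_swap: "nc_ii I J I' I'' = nc_i J I I' I''"
  by (simp add: nc_i_def nc_ii_def)

theorem theorem6p5:
  fixes m n :: nat and I J :: "nat set"
  assumes "1 \<le> m" and "m < n"
    and "I \<subseteq> {1..n}" and "J \<subseteq> {1..n}" and "card I = m" and "card J = m"
    and "noncrossing I J"
  shows "\<exists>a b :: nat. kappa n 0 J I = enat a \<and> kappa n 0 I J = enat b \<and>
           cexp I J = int a - int b"
proof -
  have n: "0 < n" using assms by simp
  have fI: "finite I" and fJ: "finite J" using assms finite_subset by blast+
  have cd: "card (I - J) = card (J - I)"
    using assms fI fJ by (simp add: card_Diff_subset_Int Int_commute)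
  have cd': "card (J - I) = card (I - J)" using cd by simp
  show ?thesis
  proof (cases "\<exists>J' J''. nc_i I J J' J''")
    case True
    then obtain J' J'' where nc: "nc_i I J J' J''" by blast
    note k = case_i[OF n assms(3,4) cd nc]
    have ex: "\<exists>k. \<exists>J' J''. nc_i I J J' J'' \<and> k = int (card J'') - int (card J')" using nc by blast
    have "cexp I J = (SOME k. \<exists>J' J''. nc_i I J J' J'' \<and> k = int (card J'') - int (card J'))"
      using True by (simp add: cexp_def)
    also have "\<dots> = int (card J'') - int (card J')"
    proof -
      from someI_ex[OF ex] obtain A B where AB: "nc_i I J A B"
        "(SOME k. \<exists>J' J''. nc_i I J J' J'' \<and> k = int (card J'') - int (card J')) = int (card B) - int (card A)"
        by blast
      note k2 = case_i[OF n assms(3,4) cd AB(1)]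
      show ?thesis using AB(2) k k2 by simp
    qed
    finally show ?thesis using k by blast
  next
    case False
    then obtain I' I'' where nc: "nc_ii I J I' I''" using assms(7) by (auto simp: noncrossing_def)
    note k = case_i[OF n assms(4,3) cd' nc[unfolded nc_swap]]
    have ex: "\<exists>k. \<exists>I' I''. nc_ii I J I' I'' \<and> k = int (card I') - int (card I'')" using nc by blast
    have "cexp I J = (SOME k. \<exists>I' I''. nc_ii I J I' I'' \<and> k = int (card I') - int (card I''))"
      using False by (simp add: cexp_def)
    also have "\<dots> = int (card I') - int (card I'')"
    proof -
      from someI_ex[OF ex] obtain A B where AB: "nc_ii I J A B"
        "(SOME k. \<exists>I' I''. nc_ii I J I' I'' \<and> k = int (card I') - int (card I'')) = int (card A) - int (card B)"
        by blast
      note k2 = case_i[OF n assms(4,3) cd' AB(1)[unfolded nc_swap]]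
      show ?thesis using AB(2) k k2 by simp
    qed
    finally show ?thesis using k by blast
  qed
qed

end
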